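(* The $5$-dimensional real unimodular Lie algebra $\mathfrak{sl}(2,\mathbb R)\ltimes\mathbb R^2$ possesses an inner product with a geodesic basis.
   Context: $\mathfrak{sl}(2,\mathbb R)\ltimes\mathbb R^2$ is the semidirect product in which $\mathfrak{sl}(2,\mathbb R)$ acts on the abelian ideal $\mathbb R^2$ by its canonical linear action; equivalently it has basis $\{X_1,\dots,X_5\}$ with nonzero brackets $[X_1,X_2]=2X_2$, $[X_1,X_3]=-2X_3$, $[X_1,X_4]=X_4$, $[X_1,X_5]=-X_5$, $[X_2,X_3]=X_1$, $[X_3,X_4]=X_5$, $[X_2,X_5]=X_4$. For an inner product $\langle\cdot,\cdot\rangle$ on a real Lie algebra $\mathfrak g$, a nonzero $X\in\mathfrak g$ is a geodesic element if $\langle X,[X,Y]\rangle=0$ for all $Y\in\mathfrak g$; a geodesic basis is a basis consisting of geodesic elements. *)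

theory Defs
  imports "HOL-Analysis.Analysis"
begin

text \<open>The Lie algebra sl(2,R) \<ltimes> R^2 is realised on real^5, with X_k the k-th
  standard basis vector (components indexed 1,2,3,4,5 of the index type 5).
  The bracket is the bilinear extension of the structure constants
  [X1,X2]=2X2, [X1,X3]=-2X3, [X1,X4]=X4, [X1,X5]=-X5, [X2,X3]=X1,
  [X3,X4]=X5, [X2,X5]=X4 (all others among basis vectors zero, up to antisymmetry).\<close>

definition sl2R2_bracket :: "real^5 \<Rightarrow> real^5 \<Rightarrow> real^5" where
  "sl2R2_bracket x y =
     (let p = (\<lambda>i j. x$i * y$j - x$j * y$i) in
      (\<chi> k. if k = 1 then p 2 3
            else if k = 2 then 2 * p 1 2
            else if k = 3 then - 2 * p 1 3
            else if k = 4 then p 1 4 + p 2 5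
            else - p 1 5 + p 3 4))"

definition is_inner_product :: "('a::real_vector \<Rightarrow> 'a \<Rightarrow> real) \<Rightarrow> bool" where
  "is_inner_product B \<longleftrightarrow>
     (\<forall>x. linear (B x)) \<and> (\<forall>y. linear (\<lambda>x. B x y)) \<and>
     (\<forall>x y. B x y = B y x) \<and> (\<forall>x. x \<noteq> 0 \<longrightarrow> B x x > 0)"

definition geodesic_element ::
  "('a::real_vector \<Rightarrow> 'a \<Rightarrow> 'a) \<Rightarrow> ('a \<Rightarrow> 'a \<Rightarrow> real) \<Rightarrow> 'a \<Rightarrow> bool" where
  "geodesic_element br B X \<longleftrightarrow> X \<noteq> 0 \<and> (\<forall>Y. B X (br X Y) = 0)"

end

theory Submission
  imports Defs
begin

lemma exhaust_5':
  fixes x :: 5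
  shows "x = 1 \<or> x = 2 \<or> x = 3 \<or> x = 4 \<or> x = 5"
proof (induct x)
  case (of_int z)
  then have "z = 0 \<or> z = 1 \<or> z = 2 \<or> z = 3 \<or> z = 4" by fastforce
  then show ?case by auto
qed

lemma forall_5': "(\<forall>i::5. P i) \<longleftrightarrow> P 1 \<and> P 2 \<and> P 3 \<and> P 4 \<and> P 5"
  by (metis exhaust_5')

definition Bm :: "real^5 \<Rightarrow> real^5 \<Rightarrow> real" where
  "Bm x y = 2 * (x$1 * y$1) + 2 * (x$2 * y$2) + 2 * (x$3 * y$3) + x$4 * y$4 + x$5 * y$5"

definition vv :: "real \<Rightarrow> real \<Rightarrow> real \<Rightarrow> real \<Rightarrow> real \<Rightarrow> real^5" where
  "vv a b c d e = (\<chi> k. if k = 1 then a else if k = 2 then b else if k = 3 then c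
                         else if k = 4 then d else e)"

lemma vv_nth [simp]:
  "vv a b c d e $ 1 = a" "vv a b c d e $ 2 = b" "vv a b c d e $ 3 = c"
  "vv a b c d e $ 4 = d" "vv a b c d e $ 5 = e"
  by (simp_all add: vv_def)

lemma vv_eq: "vv a b c d e = vv a' b' c' d' e' \<longleftrightarrow> a = a' \<and> b = b' \<and> c = c' \<and> d = d' \<and> e = e'"
  by (auto simp: vec_eq_iff forall_5')

lemma vv_all: "x = vv (x$1) (x$2) (x$3) (x$4) (x$5)"
  by (simp add: vec_eq_iff forall_5')

lemma vv_zero: "vv a b c d e = 0 \<longleftrightarrow> a = 0 \<and> b = 0 \<and> c = 0 \<and> d = 0 \<and> e = 0"
  by (auto simp: vec_eq_iff forall_5')

lemma vv_add: "vv a b c d e + vv a' b' c' d' e' = vv (a+a') (b+b') (c+c') (d+d') (e+e')"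
  by (simp add: vec_eq_iff forall_5')

lemma vv_scale: "r *\<^sub>R vv a b c d e = vv (r*a) (r*b) (r*c) (r*d) (r*e)"
  by (simp add: vec_eq_iff forall_5')

lemma Bm_ip: "is_inner_product Bm"
  unfolding is_inner_product_def
proof (intro conjI allI impI)
  fix x :: "real^5"
  show "linear (Bm x)"
    by (rule linearI) (simp_all add: Bm_def algebra_simps)
  show "linear (\<lambda>y. Bm y x)"
    by (rule linearI) (simp_all add: Bm_def algebra_simps)
next
  fix x y :: "real^5" show "Bm x y = Bm y x" by (simp add: Bm_def mult.commute)
next
  fix x :: "real^5" assume "x \<noteq> 0"
  then have "x$1 \<noteq> 0 \<or> x$2 \<noteq> 0 \<or> x$3 \<noteq> 0 \<or> x$4 \<noteq> 0 \<or> x$5 \<noteq> 0"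
    by (auto simp: vec_eq_iff forall_5')
  moreover have "\<And>i. x$i * x$i \<ge> 0" by simp
  moreover have "\<And>i. x$i \<noteq> 0 \<Longrightarrow> x$i * x$i > 0" by (metis not_real_square_gt_zero)
  ultimately show "Bm x x > 0"
    unfolding Bm_def
    by (smt (verit))
qed

definition S0 :: "(real^5) set" where
  "S0 = {vv 1 0 0 0 0, vv 0 1 1 0 0, vv 0 1 (-1) 0 0, vv 0 1 0 0 2, vv 0 0 1 2 0}"

lemma geo: "X \<in> S0 \<Longrightarrow> geodesic_element sl2R2_bracket Bm X"
  unfolding S0_def geodesic_element_def
  by (auto simp: vv_zero simp: vv_eq Bm_def sl2R2_bracket_def Let_def algebra_simps)

lemma span_S0: "span S0 = UNIV"
proof -
  have ax: "vv a b c d e \<in> span S0" for a b c d e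
  proof -
    have "vv a b c d e = a *\<^sub>R vv 1 0 0 0 0
        + ((b + c)/2 - d/4 - e/4) *\<^sub>R vv 0 1 1 0 0
        + ((b - c)/2 - e/4 + d/4) *\<^sub>R vv 0 1 (-1) 0 0
        + (e/2) *\<^sub>R vv 0 1 0 0 2 + (d/2) *\<^sub>R vv 0 0 1 2 0"
      by (simp add: vv_add vv_scale vv_eq field_simps)
    also have "\<dots> \<in> span S0"
      unfolding S0_def by (intro span_add span_scale span_base) auto
    finally show ?thesis .
  qed
  show ?thesis using ax vv_all by (metis UNIV_eq_I)
qed

lemma indep_S0: "independent S0"
proof -
  have "card S0 = 5" unfolding S0_def by (simp add: vv_eq)
  then have "card S0 = dim (UNIV :: (real^5) set)" by simp
  moreover have "finite S0" unfolding S0_def by simp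
  ultimately show ?thesis using card_eq_dim[of S0 UNIV] span_S0 by auto
qed

theorem proposition8p1:
  shows "\<exists>B :: real^5 \<Rightarrow> real^5 \<Rightarrow> real. is_inner_product B \<and>
           (\<exists>S. independent S \<and> span S = UNIV \<and>
                (\<forall>X\<in>S. geodesic_element sl2R2_bracket B X))"
  using Bm_ip indep_S0 span_S0 geo by blast

end
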